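(* Let $\Omega$ be a bounded, nonempty open set in $\mathbb{R}^d$. If $\Omega$ is spectral, then its boundary $\partial\Omega$ has Lebesgue measure zero.
   Context: $\Omega$ is spectral if there is a countable set $\Lambda\subset\mathbb{R}^d$ such that the exponentials $e^{2\pi i\langle\lambda,x\rangle}$, $\lambda\in\Lambda$, form an orthogonal basis of $L^2(\Omega)$. *)

theory Defs
  imports "HOL-Analysis.Analysis"
begin

definition expo :: "'a::euclidean_space \<Rightarrow> 'a \<Rightarrow> complex" where
  "expo l x = cis (2 * pi * (l \<bullet> x))"

definition square_integrable_on :: "('a::euclidean_space \<Rightarrow> complex) \<Rightarrow> 'a set \<Rightarrow> bool" where
  "square_integrable_on f \<Omega> \<longleftrightarrow>
     f \<in> borel_measurable (lebesgue_on \<Omega>) \<and>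
     integrable (lebesgue_on \<Omega>) (\<lambda>x. (norm (f x))\<^sup>2)"

definition L2_inner :: "'a::euclidean_space set \<Rightarrow> ('a \<Rightarrow> complex) \<Rightarrow> ('a \<Rightarrow> complex) \<Rightarrow> complex" where
  "L2_inner \<Omega> f g = integral\<^sup>L (lebesgue_on \<Omega>) (\<lambda>x. f x * cnj (g x))"

definition orthogonal_basis_exps :: "'a::euclidean_space set \<Rightarrow> 'a set \<Rightarrow> bool" where
  "orthogonal_basis_exps \<Omega> \<Lambda> \<longleftrightarrow>
     (\<forall>l\<in>\<Lambda>. \<forall>m\<in>\<Lambda>. l \<noteq> m \<longrightarrow> L2_inner \<Omega> (expo l) (expo m) = 0) \<and>
     (\<forall>f. square_integrable_on f \<Omega> \<longrightarrow> (\<forall>l\<in>\<Lambda>. L2_inner \<Omega> f (expo l) = 0) \<longrightarrow>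
          (AE x in lebesgue_on \<Omega>. f x = 0))"

definition spectral :: "'a::euclidean_space set \<Rightarrow> bool" where
  "spectral \<Omega> \<longleftrightarrow> (\<exists>\<Lambda>. countable \<Lambda> \<and> orthogonal_basis_exps \<Omega> \<Lambda>)"

end

theory Submission
  imports Defs "HOL-Analysis.Analysis"
begin

lemma borel_measurable_cnj' [measurable]:
  "f \<in> borel_measurable M \<Longrightarrow> (\<lambda>x. cnj (f x :: complex)) \<in> borel_measurable M"
  by (rule borel_measurable_continuous_on[where f=cnj]) (auto intro: continuous_on_cnj continuous_on_id)

locale pset = finite_measure M for M :: "'a measure" +
  fixes L :: "'b set" and e :: "'b \<Rightarrow> 'a \<Rightarrow> complex"
  assumes e_meas[measurable]: "\<And>l. e l \<in> borel_measurable M"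
  and e_norm: "\<And>l x. x \<in> space M \<Longrightarrow> norm (e l x) = 1"
  and orth: "\<And>l k. l \<in> L \<Longrightarrow> k \<in> L \<Longrightarrow> l \<noteq> k \<Longrightarrow> (\<integral>x. e l x * cnj (e k x) \<partial>M) = 0"
  and compl: "\<And>f. f \<in> borel_measurable M \<Longrightarrow> integrable M (\<lambda>x. (norm (f x))\<^sup>2) \<Longrightarrow>
      (\<forall>l\<in>L. (\<integral>x. f x * cnj (e l x) \<partial>M) = 0) \<Longrightarrow> AE x in M. f x = 0"
  and cnt: "countable L"
  and Lne: "L \<noteq> {}"
  and mpos: "measure M (space M) > 0"
begin

definition "mm = measure M (space M)"
definition ipr :: "('a \<Rightarrow> complex) \<Rightarrow> ('a \<Rightarrow> complex) \<Rightarrow> complex" where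
  "ipr f g = (\<integral>x. f x * cnj (g x) \<partial>M)"
definition bdd :: "('a \<Rightarrow> complex) \<Rightarrow> bool" where "bdd f \<longleftrightarrow> f \<in> borel_measurable M \<and> (\<exists>B. \<forall>x\<in>space M. norm (f x) \<le> B)"

lemma mm_pos: "mm > 0" using mpos by (simp add: mm_def)

lemma bdd_integrable: "bdd f \<Longrightarrow> integrable M f"
proof -
  assume "bdd f"
  then obtain B where "f \<in> borel_measurable M" "\<forall>x\<in>space M. norm (f x) \<le> B" unfolding bdd_def by auto
  then show ?thesis by (intro integrable_const_bound[where B=B]) (auto intro: AE_I2)
qed

lemma bdd_meas: "bdd f \<Longrightarrow> f \<in> borel_measurable M"
  unfolding bdd_def by auto

lemma bddI: "f \<in> borel_measurable M \<Longrightarrow> (\<And>x. x \<in> space M \<Longrightarrow> norm (f x) \<le> B) \<Longrightarrow> bdd f"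
  unfolding bdd_def by auto

lemma bddE: assumes "bdd f" obtains B where "B \<ge> 0" "\<And>x. x \<in> space M \<Longrightarrow> norm (f x) \<le> B"
proof -
  from assms obtain B where B: "\<forall>x\<in>space M. norm (f x) \<le> B" unfolding bdd_def by auto
  show ?thesis using that[of "max B 0"] B by (meson max.cobounded2 max.coboundedI1)
qed

lemma bdd_e: "bdd (e l)"
  by (rule bddI[where B=1]) (auto simp: e_norm)

lemma bdd_mult: assumes "bdd f" "bdd g" shows "bdd (\<lambda>x. f x * g x)"
proof -
  obtain A B where AB: "A \<ge> 0" "B \<ge> 0" "\<And>x. x \<in> space M \<Longrightarrow> norm (f x) \<le> A"
    "\<And>x. x \<in> space M \<Longrightarrow> norm (g x) \<le> B" using assms by (metis bddE)
  have [measurable]: "f \<in> borel_measurable M" "g \<in> borel_measurable M" using assms bdd_meas by auto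
  show ?thesis
    by (rule bddI[where B="A*B"]) (auto simp: AB mult_mono norm_mult)
qed

lemma bdd_cnj: assumes "bdd f" shows "bdd (\<lambda>x. cnj (f x))"
proof -
  obtain A where "\<And>x. x \<in> space M \<Longrightarrow> norm (f x) \<le> A" using assms by (metis bddE)
  moreover have [measurable]: "f \<in> borel_measurable M" using assms bdd_meas by auto
  ultimately show ?thesis
    by (intro bddI[where B=A]) auto
qed

lemma bdd_mult_cnj: "bdd f \<Longrightarrow> bdd g \<Longrightarrow> bdd (\<lambda>x. f x * cnj (g x))"
  using bdd_mult bdd_cnj by blast

lemma bdd_add: assumes "bdd f" "bdd g" shows "bdd (\<lambda>x. f x + g x)"
proof -
  obtain A B where AB: "\<And>x. x \<in> space M \<Longrightarrow> norm (f x) \<le> A"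
    "\<And>x. x \<in> space M \<Longrightarrow> norm (g x) \<le> B" using assms by (metis bddE)
  have [measurable]: "f \<in> borel_measurable M" "g \<in> borel_measurable M" using assms bdd_meas by auto
  show ?thesis
    by (rule bddI[where B="A+B"]) (auto intro: AB add_mono norm_triangle_le)
qed

lemma bdd_const: "bdd (\<lambda>x. c)"
  by (rule bddI[where B="norm c"]) auto

lemma bdd_cmult: "bdd f \<Longrightarrow> bdd (\<lambda>x. c * f x)"
  using bdd_mult[OF bdd_const] by blast

lemma bdd_diff: "bdd f \<Longrightarrow> bdd g \<Longrightarrow> bdd (\<lambda>x. f x - g x)"
  using bdd_add[of f "\<lambda>x. (-1) * g x"] bdd_cmult[of g "-1"] by simp

lemma bdd_sum: "finite F \<Longrightarrow> (\<And>l. l \<in> F \<Longrightarrow> bdd (u l)) \<Longrightarrow> bdd (\<lambda>x. \<Sum>l\<in>F. u l x)"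
proof (induction F rule: finite_induct)
  case empty then show ?case using bdd_const[of 0] by simp
next
  case (insert a F) then show ?case using bdd_add[of "u a" "\<lambda>x. \<Sum>l\<in>F. u l x"] by simp
qed

lemma bdd_esum: "finite F \<Longrightarrow> bdd (\<lambda>x. \<Sum>l\<in>F. a l * e l x)"
  by (intro bdd_sum bdd_cmult bdd_e)

lemma ipr_cnj: "ipr g f = cnj (ipr f g)"
proof -
  have "cnj (ipr f g) = (\<integral>x. cnj (f x * cnj (g x)) \<partial>M)"
    unfolding ipr_def by (rule Bochner_Integration.integral_cnj[symmetric])
  then show ?thesis by (simp add: ipr_def mult.commute)
qed

lemma ipr_add_left: "bdd f \<Longrightarrow> bdd g \<Longrightarrow> bdd h \<Longrightarrow> ipr (\<lambda>x. f x + g x) h = ipr f h + ipr g h"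
  unfolding ipr_def by (simp add: distrib_right bdd_integrable bdd_mult_cnj)

lemma ipr_diff_left: "bdd f \<Longrightarrow> bdd g \<Longrightarrow> bdd h \<Longrightarrow> ipr (\<lambda>x. f x - g x) h = ipr f h - ipr g h"
  unfolding ipr_def by (simp add: left_diff_distrib bdd_integrable bdd_mult_cnj)

lemma ipr_diff_right: "bdd f \<Longrightarrow> bdd g \<Longrightarrow> bdd h \<Longrightarrow> ipr h (\<lambda>x. f x - g x) = ipr h f - ipr h g"
  by (metis ipr_cnj ipr_diff_left complex_cnj_diff)

lemma ipr_sum_left: assumes "finite F" "\<And>l. l \<in> F \<Longrightarrow> bdd (u l)" "bdd h"
  shows "ipr (\<lambda>x. \<Sum>l\<in>F. u l x) h = (\<Sum>l\<in>F. ipr (u l) h)"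
  unfolding ipr_def sum_distrib_right
  by (rule Bochner_Integration.integral_sum[where I=F and f="\<lambda>l x. u l x * cnj (h x)"]) (use assms in \<open>auto intro: bdd_integrable bdd_mult_cnj\<close>)

lemma ipr_esum_left: assumes "finite F" "bdd h"
  shows "ipr (\<lambda>x. \<Sum>l\<in>F. a l * e l x) h = (\<Sum>l\<in>F. a l * ipr (e l) h)"
proof -
  have "ipr (\<lambda>x. \<Sum>l\<in>F. a l * e l x) h = (\<Sum>l\<in>F. ipr (\<lambda>x. a l * e l x) h)"
    by (rule ipr_sum_left) (use assms in \<open>auto intro: bdd_cmult bdd_e\<close>)
  also have "\<dots> = (\<Sum>l\<in>F. a l * ipr (e l) h)"
    unfolding ipr_def by (simp add: mult.assoc)
  finally show ?thesis .
qed

lemma ipr_esum_right: assumes "finite F" "bdd h"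
  shows "ipr h (\<lambda>x. \<Sum>l\<in>F. a l * e l x) = (\<Sum>l\<in>F. cnj (a l) * ipr h (e l))"
  by (subst ipr_cnj) (simp add: ipr_esum_left assms ipr_cnj[of "e _" h])

lemma ipr_ee: assumes "l \<in> L" "k \<in> L" shows "ipr (e l) (e k) = (if l = k then mm else 0)"
proof (cases "l = k")
  case True
  have "ipr (e l) (e l) = (\<integral>x. 1 \<partial>M)"
    unfolding ipr_def
    by (rule Bochner_Integration.integral_cong) (auto simp: complex_norm_square[symmetric] e_norm)
  then show ?thesis using True by (simp add: mm_def scaleR_conv_of_real)
qed (use assms orth in \<open>auto simp: ipr_def\<close>)

lemma ipr_self: "bdd f \<Longrightarrow> ipr f f = of_real (\<integral>x. (norm (f x))\<^sup>2 \<partial>M)"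
  unfolding ipr_def by (simp add: complex_norm_square[symmetric] integral_complex_of_real[symmetric])


lemma ipr_e_esum: assumes "finite G" "G \<subseteq> L" "l \<in> G"
  shows "ipr (e l) (\<lambda>x. \<Sum>k\<in>G. b k * e k x) = cnj (b l) * mm"
proof -
  have "ipr (e l) (\<lambda>x. \<Sum>k\<in>G. b k * e k x) = (\<Sum>k\<in>G. cnj (b k) * ipr (e l) (e k))"
    by (rule ipr_esum_right[OF assms(1) bdd_e])
  also have "\<dots> = (\<Sum>k\<in>G. if k = l then cnj (b l) * mm else 0)"
    by (rule sum.cong) (use assms in \<open>auto simp: ipr_ee subsetD\<close>)
  also have "\<dots> = cnj (b l) * mm" using assms by simp
  finally show ?thesis .
qed

lemma ipr_esum_e: assumes "finite G" "G \<subseteq> L" "l \<in> L"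
  shows "ipr (\<lambda>x. \<Sum>k\<in>G. b k * e k x) (e l) = (if l \<in> G then b l * mm else 0)"
proof -
  have "ipr (\<lambda>x. \<Sum>k\<in>G. b k * e k x) (e l) = (\<Sum>k\<in>G. b k * ipr (e k) (e l))"
    by (rule ipr_esum_left[OF assms(1) bdd_e])
  also have "\<dots> = (\<Sum>k\<in>G. if k = l then b l * mm else 0)"
    by (rule sum.cong) (use assms in \<open>auto simp: ipr_ee subsetD\<close>)
  also have "\<dots> = (if l \<in> G then b l * mm else 0)" using assms by simp
  finally show ?thesis .
qed

lemma esum_norm: assumes "finite G" "G \<subseteq> L"
  shows "ipr (\<lambda>x. \<Sum>k\<in>G. b k * e k x) (\<lambda>x. \<Sum>k\<in>G. b k * e k x) = of_real (mm * (\<Sum>k\<in>G. (norm (b k))\<^sup>2))"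
proof -
  have "ipr (\<lambda>x. \<Sum>k\<in>G. b k * e k x) (\<lambda>x. \<Sum>k\<in>G. b k * e k x)
      = (\<Sum>l\<in>G. b l * ipr (e l) (\<lambda>x. \<Sum>k\<in>G. b k * e k x))"
    by (rule ipr_esum_left[OF assms(1) bdd_esum[OF assms(1)]])
  also have "\<dots> = (\<Sum>l\<in>G. b l * (cnj (b l) * mm))"
    by (rule sum.cong) (use assms in \<open>auto simp: ipr_e_esum\<close>)
  also have "\<dots> = (\<Sum>l\<in>G. of_real (mm * (norm (b l))\<^sup>2))"
  proof (rule sum.cong)
    fix l show "b l * (cnj (b l) * mm) = of_real (mm * (norm (b l))\<^sup>2)"
      by (simp only: of_real_mult complex_norm_square) (simp add: ac_simps)
  qed simp
  also have "\<dots> = of_real (mm * (\<Sum>k\<in>G. (norm (b k))\<^sup>2))"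
    by (simp only: of_real_sum[symmetric] sum_distrib_left)
  finally show ?thesis .
qed

definition "cf f l = ipr f (e l)"

lemma aux_cnj1: "cnj (z / complex_of_real r) * z = complex_of_real ((norm z)\<^sup>2 / r)"
  by (simp only: of_real_divide complex_norm_square complex_cnj_divide complex_cnj_complex_of_real)
    (simp add: mult.commute)

lemma aux_cnj2: "(z / complex_of_real r) * cnj z = complex_of_real ((norm z)\<^sup>2 / r)"
  by (simp only: of_real_divide complex_norm_square) (simp add: mult.commute)


lemma pythag: assumes "bdd f" "finite F" "F \<subseteq> L"
  defines "S \<equiv> (\<lambda>x. \<Sum>k\<in>F. (cf f k / mm) * e k x)"
  shows "ipr (\<lambda>x. f x - S x) (\<lambda>x. f x - S x) = ipr f f - of_real ((\<Sum>k\<in>F. (norm (cf f k))\<^sup>2) / mm)"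
proof -
  have bS: "bdd S" unfolding S_def by (rule bdd_esum[OF assms(2)])
  have bfS: "bdd (\<lambda>x. f x - S x)" by (rule bdd_diff[OF assms(1) bS])
  have "ipr (\<lambda>x. f x - S x) (\<lambda>x. f x - S x) = ipr f (\<lambda>x. f x - S x) - ipr S (\<lambda>x. f x - S x)"
    by (rule ipr_diff_left[OF assms(1) bS bfS])
  also have "\<dots> = (ipr f f - ipr f S) - (ipr S f - ipr S S)"
    by (simp add: ipr_diff_right[OF assms(1) bS] assms(1) bS)
  also have "ipr f S = (\<Sum>k\<in>F. cnj (cf f k / mm) * cf f k)"
    unfolding S_def by (subst ipr_esum_right[OF assms(2,1)]) (simp add: cf_def)
  also have "ipr S f = (\<Sum>k\<in>F. (cf f k / mm) * cnj (cf f k))"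
    unfolding S_def by (subst ipr_esum_left[OF assms(2,1)]) (simp add: cf_def ipr_cnj[of "e _" f])
  also have "ipr S S = of_real (mm * (\<Sum>k\<in>F. (norm (cf f k / mm))\<^sup>2))"
    unfolding S_def by (rule esum_norm[OF assms(2,3)])
  finally have eq: "ipr (\<lambda>x. f x - S x) (\<lambda>x. f x - S x) = ipr f f - (\<Sum>k\<in>F. cnj (cf f k / mm) * cf f k)
     - (\<Sum>k\<in>F. (cf f k / mm) * cnj (cf f k)) + of_real (mm * (\<Sum>k\<in>F. (norm (cf f k / mm))\<^sup>2))"
    by simp
  have mm0: "mm \<noteq> 0" using mm_pos by simp
  have 1: "(\<Sum>k\<in>F. cnj (cf f k / mm) * cf f k) = of_real ((\<Sum>k\<in>F. (norm (cf f k))\<^sup>2) / mm)"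
    by (simp only: aux_cnj1 of_real_sum[symmetric] sum_divide_distrib)
  have 2: "(\<Sum>k\<in>F. (cf f k / mm) * cnj (cf f k)) = of_real ((\<Sum>k\<in>F. (norm (cf f k))\<^sup>2) / mm)"
    by (simp only: aux_cnj2 of_real_sum[symmetric] sum_divide_distrib)
  have 3: "mm * (\<Sum>k\<in>F. (norm (cf f k / mm))\<^sup>2) = (\<Sum>k\<in>F. (norm (cf f k))\<^sup>2) / mm"
    using mm0 mm_pos by (simp add: sum_distrib_left sum_divide_distrib norm_divide power_divide power2_eq_square)
  show ?thesis unfolding eq 1 2 3 by simp
qed

lemma bessel: assumes "bdd f" "finite F" "F \<subseteq> L"
  shows "(\<Sum>k\<in>F. (norm (cf f k))\<^sup>2) \<le> mm * (\<integral>x. (norm (f x))\<^sup>2 \<partial>M)"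
proof -
  define S where "S = (\<lambda>x. \<Sum>k\<in>F. (cf f k / mm) * e k x)"
  have bfS: "bdd (\<lambda>x. f x - S x)" unfolding S_def by (rule bdd_diff[OF assms(1) bdd_esum[OF assms(2)]])
  have P: "ipr (\<lambda>x. f x - S x) (\<lambda>x. f x - S x) = ipr f f - of_real ((\<Sum>k\<in>F. (norm (cf f k))\<^sup>2) / mm)"
    unfolding S_def by (rule pythag[OF assms])
  have "complex_of_real (\<integral>x. (norm (f x - S x))\<^sup>2 \<partial>M) = of_real ((\<integral>x. (norm (f x))\<^sup>2 \<partial>M) - (\<Sum>k\<in>F. (norm (cf f k))\<^sup>2) / mm)"
    unfolding of_real_diff ipr_self[OF bfS, symmetric] ipr_self[OF assms(1), symmetric] P ..
  then have eq: "(\<integral>x. (norm (f x - S x))\<^sup>2 \<partial>M) = (\<integral>x. (norm (f x))\<^sup>2 \<partial>M) - (\<Sum>k\<in>F. (norm (cf f k))\<^sup>2) / mm"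
    by (simp only: of_real_eq_iff)
  have "(\<integral>x. (norm (f x - S x))\<^sup>2 \<partial>M) \<ge> 0" by (rule integral_nonneg_AE) simp
  then have "(\<Sum>k\<in>F. (norm (cf f k))\<^sup>2) / mm \<le> (\<integral>x. (norm (f x))\<^sup>2 \<partial>M)" using eq by linarith
  then show ?thesis using mm_pos by (simp add: divide_le_eq mult.commute)
qed

end

lemma filterlim_fsets:
  assumes "\<And>k. finite (F k)" "\<And>k. F k \<subseteq> A" "\<And>x. x \<in> A \<Longrightarrow> eventually (\<lambda>k. x \<in> F k) sequentially"
  shows "filterlim F (finite_subsets_at_top A) sequentially"
proof -
  have "eventually (\<lambda>k. P (F k)) sequentially" if "eventually P (finite_subsets_at_top A)" for P
  proof -
    from that obtain X where X: "finite X" "X \<subseteq> A" "\<And>Y. finite Y \<Longrightarrow> X \<subseteq> Y \<Longrightarrow> Y \<subseteq> A \<Longrightarrow> P Y"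
      unfolding eventually_finite_subsets_at_top by metis
    have "eventually (\<lambda>k. \<forall>x\<in>X. x \<in> F k) sequentially"
      using X(1,2) assms(3) by (intro eventually_ball_finite) auto
    then show ?thesis
      by eventually_elim (use X assms(1,2) in blast)
  qed
  then show ?thesis unfolding filterlim_def le_filter_def eventually_filtermap by auto
qed

lemma sum_tendsto_infsum:
  assumes "g summable_on A" "filterlim F (finite_subsets_at_top A) sequentially"
  shows "(\<lambda>k. sum g (F k)) \<longlonglongrightarrow> infsum g A"
proof -
  have "(sum g \<longlongrightarrow> infsum g A) (finite_subsets_at_top A)"
    using assms(1) by (simp add: summable_iff_has_sum_infsum has_sum_def)
  then show ?thesis by (rule filterlim_compose[OF _ assms(2)])
qed

context pset begin

lemma pythag_le: assumes "bdd f" "finite F" "F \<subseteq> L"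
  shows "(\<integral>x. (norm (f x - (\<Sum>k\<in>F. (cf f k / mm) * e k x)))\<^sup>2 \<partial>M) \<le> (\<integral>x. (norm (f x))\<^sup>2 \<partial>M)"
proof -
  define S where "S = (\<lambda>x. \<Sum>k\<in>F. (cf f k / mm) * e k x)"
  have bfS: "bdd (\<lambda>x. f x - S x)" unfolding S_def by (rule bdd_diff[OF assms(1) bdd_esum[OF assms(2)]])
  have P: "ipr (\<lambda>x. f x - S x) (\<lambda>x. f x - S x) = ipr f f - of_real ((\<Sum>k\<in>F. (norm (cf f k))\<^sup>2) / mm)"
    unfolding S_def by (rule pythag[OF assms])
  have "complex_of_real (\<integral>x. (norm (f x - S x))\<^sup>2 \<partial>M) = of_real ((\<integral>x. (norm (f x))\<^sup>2 \<partial>M) - (\<Sum>k\<in>F. (norm (cf f k))\<^sup>2) / mm)"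
    unfolding of_real_diff ipr_self[OF bfS, symmetric] ipr_self[OF assms(1), symmetric] P ..
  then have eq: "(\<integral>x. (norm (f x - S x))\<^sup>2 \<partial>M) = (\<integral>x. (norm (f x))\<^sup>2 \<partial>M) - (\<Sum>k\<in>F. (norm (cf f k))\<^sup>2) / mm"
    by (simp only: of_real_eq_iff)
  have "(\<Sum>k\<in>F. (norm (cf f k))\<^sup>2) / mm \<ge> 0" using mm_pos by (intro divide_nonneg_pos sum_nonneg) auto
  then show ?thesis using eq unfolding S_def by linarith
qed

lemma bdd_sq_int: assumes "bdd g" shows "integrable M (\<lambda>x. (norm (g x))\<^sup>2)"
proof -
  obtain B where B: "B \<ge> 0" "\<And>x. x \<in> space M \<Longrightarrow> norm (g x) \<le> B" using bddE[OF assms] by metis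
  have [measurable]: "g \<in> borel_measurable M" using assms bdd_meas by auto
  show ?thesis
    by (rule integrable_const_bound[where B="B^2"]) (auto intro!: AE_I2 power_mono B)
qed

lemma L1_bound: assumes "bdd g" "c > 0"
  shows "(\<integral>x. norm (g x) \<partial>M) \<le> (c * (\<integral>x. (norm (g x))\<^sup>2 \<partial>M) + mm / c) / 2"
proof -
  have i2: "integrable M (\<lambda>x. (norm (g x))\<^sup>2)" by (rule bdd_sq_int[OF assms(1)])
  have i3: "integrable M (\<lambda>x. (c * (norm (g x))\<^sup>2 + 1 / c) / 2)"
    using i2 by (intro integrable_divide integrable_add integrable_mult_right) auto
  have "(\<integral>x. norm (g x) \<partial>M) \<le> (\<integral>x. (c * (norm (g x))\<^sup>2 + 1 / c) / 2 \<partial>M)"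
  proof (rule Bochner_Integration.integral_mono)
    show "integrable M (\<lambda>x. norm (g x))" using bdd_integrable[OF assms(1)] by simp
    show "integrable M (\<lambda>x. (c * (norm (g x))\<^sup>2 + 1 / c) / 2)" by (rule i3)
    fix x
    have "0 \<le> (c * norm (g x) - 1)\<^sup>2" by simp
    then have "2 * c * norm (g x) \<le> c\<^sup>2 * (norm (g x))\<^sup>2 + 1" by (simp add: power2_eq_square algebra_simps)
    then show "norm (g x) \<le> (c * (norm (g x))\<^sup>2 + 1 / c) / 2" using assms(2)
      by (simp add: field_simps power2_eq_square)
  qed
  also have "\<dots> = (c * (\<integral>x. (norm (g x))\<^sup>2 \<partial>M) + mm / c) / 2"
    using i2 by (simp add: integral_add mm_def)
  finally show ?thesis .
qed

lemma summable_sq: assumes "bdd f" shows "(\<lambda>l. (norm (cf f l))\<^sup>2) summable_on L"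
proof (rule nonneg_bdd_above_summable_on)
  show "bdd_above (sum (\<lambda>l. (norm (cf f l))\<^sup>2) ` {F. F \<subseteq> L \<and> finite F})"
    by (rule bdd_aboveI2[where M="mm * (\<integral>x. (norm (f x))\<^sup>2 \<partial>M)"]) (use bessel[OF assms] in auto)
qed simp

lemma summable_prod: assumes "bdd f" "bdd h" shows "(\<lambda>l. cf f l * cnj (cf h l)) summable_on L"
proof -
  have "(\<lambda>l. ((norm (cf f l))\<^sup>2 + (norm (cf h l))\<^sup>2) / 2) summable_on L"
    using summable_on_cmult_right[OF summable_on_add[OF summable_sq[OF assms(1)] summable_sq[OF assms(2)]], of "1/2"]
    by simp
  then have "(\<lambda>l. norm (cf f l * cnj (cf h l))) summable_on L"
  proof (rule Infinite_Sum.abs_summable_on_comparison_test')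
    fix l
    have "0 \<le> (norm (cf f l) - norm (cf h l))\<^sup>2" by simp
    then show "norm (cf f l * cnj (cf h l)) \<le> ((norm (cf f l))\<^sup>2 + (norm (cf h l))\<^sup>2) / 2"
      by (simp add: norm_mult power2_eq_square algebra_simps)
  qed
  then show ?thesis by (rule abs_summable_summable)
qed


lemma parseval:
  assumes bf: "bdd f" and bh: "bdd h"
  shows "((\<lambda>l. cf f l * cnj (cf h l)) has_sum (mm * ipr f h)) L"
proof -
  have mm0: "mm > 0" by (rule mm_pos)
  have fmeas[measurable]: "f \<in> borel_measurable M" using bf bdd_meas by auto
  define a where "a l = cf f l / mm" for l
  define p where "p l = (norm (a l))\<^sup>2" for l
  have p_eq: "p = (\<lambda>l. (1 / mm\<^sup>2) * (norm (cf f l))\<^sup>2)"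
    by (rule ext) (simp add: p_def a_def norm_divide power_divide)
  have psum: "p summable_on L" unfolding p_eq by (intro summable_on_cmult_right summable_sq bf)
  define P where "P = infsum p L"
  have p0: "p l \<ge> 0" for l unfolding p_def by simp
  have hasP: "(p has_sum P) L" using psum by (simp add: P_def summable_iff_has_sum_infsum)
  have sumle: "sum p Y \<le> P" if "finite Y" "Y \<subseteq> L" for Y
    unfolding P_def by (rule finite_sum_le_infsum[OF psum that]) (simp add: p0)
  have approx: "\<exists>W. finite W \<and> W \<subseteq> L \<and> (\<forall>Y. finite Y \<and> W \<subseteq> Y \<and> Y \<subseteq> L \<longrightarrow> P - sum p Y < (1/4)^k)" for k :: nat
  proof -
    have "eventually (\<lambda>Y. dist (sum p Y) P < (1/4)^k) (finite_subsets_at_top L)"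
      using hasP unfolding has_sum_def tendsto_iff by auto
    then obtain X where X: "finite X" "X \<subseteq> L" "\<And>Y. finite Y \<Longrightarrow> X \<subseteq> Y \<Longrightarrow> Y \<subseteq> L \<Longrightarrow> dist (sum p Y) P < (1/4)^k"
      unfolding eventually_finite_subsets_at_top by metis
    show ?thesis
      by (rule exI[of _ X]) (use X in \<open>auto simp: dist_real_def abs_less_iff\<close>)
  qed
  define Q where "Q k W \<longleftrightarrow> finite W \<and> W \<subseteq> L \<and> (\<forall>Y. finite Y \<and> W \<subseteq> Y \<and> Y \<subseteq> L \<longrightarrow> P - sum p Y < (1/4)^k)"
    for k :: nat and W
  have "\<forall>k. \<exists>W. Q k W" unfolding Q_def using approx by blast
  from choice[OF this] obtain W where WQ: "\<And>k. Q k (W k)" by blast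
  have W: "\<And>k. finite (W k)" "\<And>k. W k \<subseteq> L"
    "\<And>k Y. finite Y \<Longrightarrow> W k \<subseteq> Y \<Longrightarrow> Y \<subseteq> L \<Longrightarrow> P - sum p Y < (1/4)^k"
    using WQ unfolding Q_def by blast+
  define F where "F k = (\<Union>j\<le>k. W j) \<union> from_nat_into L ` {..k}" for k
  have Ffin: "finite (F k)" for k unfolding F_def using W by auto
  have FL: "F k \<subseteq> L" for k unfolding F_def using W from_nat_into[OF Lne] by auto
  have Fmono: "F k \<subseteq> F k'" if "k \<le> k'" for k k' unfolding F_def using that by auto
  have FS: "F k \<subseteq> F (Suc k)" for k by (rule Fmono) simp
  have WF: "W k \<subseteq> F k" for k unfolding F_def by auto
  have tail: "P - sum p (F k) < (1/4)^k" for k using W(3)[OF Ffin WF FL] .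
  have Fev: "eventually (\<lambda>k. l \<in> F k) sequentially" if lL: "l \<in> L" for l
  proof -
    obtain n where "from_nat_into L n = l" using from_nat_into_surj[OF cnt lL] by blast
    then show ?thesis unfolding eventually_sequentially F_def by auto
  qed
  have Flim: "filterlim F (finite_subsets_at_top L) sequentially"
    by (rule filterlim_fsets[OF Ffin FL Fev])
  define S where "S k x = (\<Sum>l\<in>F k. a l * e l x)" for k x
  have bS: "bdd (S k)" for k unfolding S_def by (rule bdd_esum[OF Ffin])
  have Smeas[measurable]: "S k \<in> borel_measurable M" for k using bS bdd_meas by auto
  define D where "D k x = S (Suc k) x - S k x" for k x
  have Deq: "D k = (\<lambda>x. \<Sum>l\<in>F (Suc k) - F k. a l * e l x)" for k
    unfolding D_def S_def by (rule ext) (simp add: sum_diff[OF Ffin FS])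
  have bD: "bdd (D k)" for k unfolding D_def by (rule bdd_diff[OF bS bS])
  have Dmeas[measurable]: "D k \<in> borel_measurable M" for k using bD bdd_meas by auto
  have D2: "(\<integral>x. (norm (D k x))\<^sup>2 \<partial>M) \<le> mm * (1/4)^k" for k
  proof -
    have fin: "finite (F (Suc k) - F k)" using Ffin by auto
    have sub: "F (Suc k) - F k \<subseteq> L" using FL by auto
    have "complex_of_real (\<integral>x. (norm (D k x))\<^sup>2 \<partial>M) = ipr (D k) (D k)" by (rule ipr_self[OF bD, symmetric])
    also have "\<dots> = of_real (mm * (\<Sum>l\<in>F (Suc k) - F k. (norm (a l))\<^sup>2))" unfolding Deq by (rule esum_norm[OF fin sub])
    finally have eq: "(\<integral>x. (norm (D k x))\<^sup>2 \<partial>M) = mm * (\<Sum>l\<in>F (Suc k) - F k. p l)"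
      unfolding p_def by (simp only: of_real_eq_iff)
    have "(\<Sum>l\<in>F (Suc k) - F k. p l) = sum p (F (Suc k)) - sum p (F k)" by (rule sum_diff[OF Ffin FS])
    also have "\<dots> \<le> P - sum p (F k)" using sumle[OF Ffin FL] by simp
    also have "\<dots> \<le> (1/4)^k" using tail less_imp_le by blast
    finally show ?thesis unfolding eq using mm0 by (simp add: mult_left_mono)
  qed
  have D1: "(\<integral>x. norm (D k x) \<partial>M) \<le> mm * (1/2)^k" for k
  proof -
    have "(\<integral>x. norm (D k x) \<partial>M) \<le> (2^k * (\<integral>x. (norm (D k x))\<^sup>2 \<partial>M) + mm / 2^k) / 2"
      by (rule L1_bound[OF bD]) simp
    also have "\<dots> \<le> (2^k * (mm * (1/4)^k) + mm / 2^k) / 2"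
      using D2[of k] by (intro divide_right_mono add_right_mono mult_left_mono) auto
    also have "(2::real)^k * (mm * (1/4)^k) = mm * (1/2)^k"
      by (simp add: power_mult_distrib[symmetric] mult.left_commute)
    also have "mm / 2^k = mm * (1/2)^k" by (simp add: power_one_over)
    finally show ?thesis by simp
  qed
  have Dnn: "(\<integral>\<^sup>+x. ennreal (norm (D k x)) \<partial>M) \<le> ennreal (mm * (1/2)^k)" for k
  proof -
    have "(\<integral>\<^sup>+x. ennreal (norm (D k x)) \<partial>M) = ennreal (\<integral>x. norm (D k x) \<partial>M)"
      by (rule nn_integral_eq_integral) (use bdd_integrable[OF bD] in auto)
    then show ?thesis using D1[of k] by (simp add: ennreal_leI)
  qed
  have tailnn: "(\<integral>\<^sup>+x. (\<Sum>j. ennreal (norm (D (j + n) x))) \<partial>M) \<le> ennreal (2 * mm * (1/2)^n)" for n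
  proof -
    have "(\<integral>\<^sup>+x. (\<Sum>j. ennreal (norm (D (j + n) x))) \<partial>M) = (\<Sum>j. \<integral>\<^sup>+x. ennreal (norm (D (j + n) x)) \<partial>M)"
      by (rule nn_integral_suminf) measurable
    also have "\<dots> \<le> (\<Sum>j. ennreal (mm * (1/2)^(j + n)))"
      by (intro suminf_le summableI Dnn)
    also have "\<dots> = ennreal (2 * mm * (1/2)^n)"
    proof -
      have "(\<lambda>j. (mm * (1/2)^n) * (1/2::real)^j) sums ((mm * (1/2)^n) * (1 / (1 - 1/2)))"
        by (intro sums_mult geometric_sums) simp
      moreover have "(\<lambda>j. (mm * (1/2)^n) * (1/2::real)^j) = (\<lambda>j. mm * (1/2)^(j + n))"
        by (rule ext) (simp add: power_add mult_ac)
      ultimately have "(\<lambda>j. mm * (1/2::real)^(j + n)) sums (2 * mm * (1/2)^n)" by (simp add: mult_ac)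
      then show ?thesis by (rule suminf_ennreal_eq[rotated]) (use mm0 in simp)
    qed
    finally show ?thesis .
  qed
  define g where "g x = S 0 x + (\<Sum>k. D k x)" for x
  have gmeas[measurable]: "g \<in> borel_measurable M" unfolding g_def by measurable
  have AEsum: "AE x in M. summable (\<lambda>k. norm (D k x))"
  proof -
    have le0: "(\<integral>\<^sup>+x. (\<Sum>j. ennreal (norm (D j x))) \<partial>M) \<le> ennreal (2 * mm * (1/2)^0)"
      using tailnn[of 0] by simp
    have fin: "(\<integral>\<^sup>+x. (\<Sum>j. ennreal (norm (D j x))) \<partial>M) \<noteq> \<infinity>"
      unfolding infinity_ennreal_def using order.strict_trans1[OF le0 ennreal_less_top] by simp
    have mD: "(\<lambda>x. \<Sum>j. ennreal (norm (D j x))) \<in> borel_measurable M"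
      by (rule borel_measurable_suminf_order) measurable
    have "AE x in M. (\<Sum>j. ennreal (norm (D j x))) \<noteq> \<infinity>"
      by (rule nn_integral_noteq_infinite[OF mD fin])
    then show ?thesis
    proof eventually_elim
      case (elim x)
      show ?case
      proof (rule ccontr)
        assume "\<not> summable (\<lambda>k. norm (D k x))"
        then have "(\<Sum>j. ennreal (norm (D j x))) = top"
          by (rule summable_iff_suminf_neq_top[rotated]) simp
        then show False using elim by (simp add: infinity_ennreal_def)
      qed
    qed
  qed
  have Stel: "S k x = S 0 x + (\<Sum>j<k. D j x)" for k x
    unfolding D_def using sum_lessThan_telescope[of "\<lambda>j. S j x" k] by simp
  have Slim: "AE x in M. (\<lambda>k. S k x) \<longlonglongrightarrow> g x"
    using AEsum
  proof eventually_elim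
    case (elim x)
    then have "summable (\<lambda>k. D k x)" by (rule summable_norm_cancel)
    then have "(\<lambda>k. \<Sum>j<k. D j x) \<longlonglongrightarrow> (\<Sum>k. D k x)" by (rule summable_LIMSEQ)
    then show ?case unfolding g_def by (subst Stel) (intro tendsto_add tendsto_const)
  qed
  have gS_le: "AE x in M. ennreal (norm (g x - S n x)) \<le> (\<Sum>j. ennreal (norm (D (j + n) x)))" for n
    using AEsum
  proof eventually_elim
    case (elim x)
    have s: "summable (\<lambda>k. D k x)" using elim by (rule summable_norm_cancel)
    have sn: "summable (\<lambda>j. norm (D (j + n) x))" using summable_iff_shift[of "\<lambda>m. norm (D m x)" n] elim by simp
    have "g x - S n x = (\<Sum>j. D (j + n) x)"
      unfolding g_def Stel[of n] using suminf_split_initial_segment[OF s, of n] by simp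
    then have "norm (g x - S n x) \<le> (\<Sum>j. norm (D (j + n) x))"
      using summable_norm[OF sn] by simp
    then have "ennreal (norm (g x - S n x)) \<le> ennreal (\<Sum>j. norm (D (j + n) x))" by (rule ennreal_leI)
    also have "\<dots> = (\<Sum>j. ennreal (norm (D (j + n) x)))" by (rule suminf_ennreal2[symmetric]) (use sn in auto)
    finally show ?case .
  qed
  have gS_nn: "(\<integral>\<^sup>+x. ennreal (norm (g x - S n x)) \<partial>M) \<le> ennreal (2 * mm * (1/2)^n)" for n
    using nn_integral_mono_AE[OF gS_le[of n]] tailnn[of n] by (rule order_trans)
  have gS_int: "integrable M (\<lambda>x. g x - S n x)" for n
    unfolding integrable_iff_bounded using gS_nn[of n] by (auto simp: le_less_trans[OF _ ennreal_less_top])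
  have gS_L1: "(\<integral>x. norm (g x - S n x) \<partial>M) \<le> 2 * mm * (1/2)^n" for n
  proof -
    have "ennreal (\<integral>x. norm (g x - S n x) \<partial>M) = (\<integral>\<^sup>+x. ennreal (norm (g x - S n x)) \<partial>M)"
      by (rule nn_integral_eq_integral[symmetric]) (use gS_int[of n] in auto)
    then have "ennreal (\<integral>x. norm (g x - S n x) \<partial>M) \<le> ennreal (2 * mm * (1/2)^n)" using gS_nn[of n] by simp
    then show ?thesis using mm0 by (subst (asm) ennreal_le_iff) auto
  qed
  have g_int: "integrable M g"
  proof -
    have "integrable M (\<lambda>x. (g x - S 0 x) + S 0 x)"
      using gS_int[of 0] bdd_integrable[OF bS[of 0]] by (rule Bochner_Integration.integrable_add)
    then show ?thesis by simp
  qed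
  have int_gu: "integrable M (\<lambda>x. g x * cnj (u x))" if bu: "bdd u" for u
  proof -
    obtain B where B: "B \<ge> 0" "\<And>x. x \<in> space M \<Longrightarrow> norm (u x) \<le> B" using bddE[OF bu] by metis
    have [measurable]: "u \<in> borel_measurable M" using bu bdd_meas by auto
    show ?thesis
    proof (rule Bochner_Integration.integrable_bound[where f="\<lambda>x. B * norm (g x)"])
      show "integrable M (\<lambda>x. B * norm (g x))" using g_int by (intro integrable_mult_right integrable_norm)
      show "(\<lambda>x. g x * cnj (u x)) \<in> borel_measurable M" by measurable
      show "AE x in M. norm (g x * cnj (u x)) \<le> norm (B * norm (g x))"
      proof (rule AE_I2)
        fix x assume x: "x \<in> space M"
        have "norm (g x) * norm (u x) \<le> norm (g x) * B" by (rule mult_left_mono) (use B x in auto)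
        then show "norm (g x * cnj (u x)) \<le> norm (B * norm (g x))" using B by (simp add: norm_mult mult.commute)
      qed
    qed
  qed
  have conv: "(\<lambda>n. ipr (S n) u) \<longlonglongrightarrow> ipr g u" if bu: "bdd u" for u
  proof -
    obtain B where B: "B \<ge> 0" "\<And>x. x \<in> space M \<Longrightarrow> norm (u x) \<le> B" using bddE[OF bu] by metis
    have [measurable]: "u \<in> borel_measurable M" using bu bdd_meas by auto
    have eq: "ipr g u - ipr (S n) u = (\<integral>x. (g x - S n x) * cnj (u x) \<partial>M)" for n
      unfolding ipr_def left_diff_distrib
      by (rule Bochner_Integration.integral_diff[symmetric]) (auto intro: int_gu[OF bu] bdd_integrable bdd_mult_cnj bS bu)
    have bnd: "norm (ipr g u - ipr (S n) u) \<le> B * (2 * mm * (1/2)^n)" for n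
    proof -
      have "norm (ipr g u - ipr (S n) u) \<le> (\<integral>x. norm ((g x - S n x) * cnj (u x)) \<partial>M)"
        unfolding eq by (rule Bochner_Integration.integral_norm_bound)
      also have "\<dots> \<le> (\<integral>x. B * norm (g x - S n x) \<partial>M)"
      proof (rule Bochner_Integration.integral_mono)
        have "integrable M (\<lambda>x. (g x - S n x) * cnj (u x))"
          unfolding left_diff_distrib
          by (intro Bochner_Integration.integrable_diff int_gu[OF bu] bdd_integrable bdd_mult_cnj bS bu)
        then show "integrable M (\<lambda>x. norm ((g x - S n x) * cnj (u x)))" by (rule integrable_norm)
        show "integrable M (\<lambda>x. B * norm (g x - S n x))" using gS_int[of n] by (intro integrable_mult_right integrable_norm)
        fix x assume "x \<in> space M"
        then have "norm (g x - S n x) * norm (u x) \<le> norm (g x - S n x) * B" using B by (intro mult_left_mono) auto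
        then show "norm ((g x - S n x) * cnj (u x)) \<le> B * norm (g x - S n x)"
          by (simp add: norm_mult mult.commute)
      qed
      also have "\<dots> = B * (\<integral>x. norm (g x - S n x) \<partial>M)" by simp
      also have "\<dots> \<le> B * (2 * mm * (1/2)^n)" using gS_L1[of n] B by (intro mult_left_mono) auto
      finally show ?thesis .
    qed
    have "(\<lambda>n. (1/2::real)^n) \<longlonglongrightarrow> 0" by (rule LIMSEQ_power_zero) simp
    from tendsto_mult[OF tendsto_const tendsto_mult[OF tendsto_const this], of B "2 * mm"]
    have "(\<lambda>n. B * (2 * mm * (1/2)^n)) \<longlonglongrightarrow> 0" by simp
    then have "(\<lambda>n. ipr g u - ipr (S n) u) \<longlonglongrightarrow> 0"
      by (rule Lim_null_comparison[OF always_eventually, rotated]) (use bnd in blast)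
    then have "(\<lambda>n. ipr g u - (ipr g u - ipr (S n) u)) \<longlonglongrightarrow> ipr g u - 0"
      by (intro tendsto_diff tendsto_const)
    then show ?thesis by simp
  qed
  have cg: "ipr g (e l) = cf f l" if l: "l \<in> L" for l
  proof -
    have "(\<lambda>n. ipr (S n) (e l)) \<longlonglongrightarrow> ipr g (e l)" by (rule conv[OF bdd_e])
    moreover have "eventually (\<lambda>n. ipr (S n) (e l) = cf f l) sequentially"
      using Fev[OF l]
    proof eventually_elim
      case (elim n)
      then show ?case unfolding S_def using ipr_esum_e[OF Ffin FL l, of a n] mm0 by (simp add: a_def)
    qed
    then have "(\<lambda>n. ipr (S n) (e l)) \<longlonglongrightarrow> cf f l" by (rule tendsto_eventually)
    ultimately show ?thesis using LIMSEQ_unique by blast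
  qed
  have fS2: "(\<integral>\<^sup>+x. ennreal ((norm (f x - S n x))\<^sup>2) \<partial>M) \<le> ennreal (\<integral>x. (norm (f x))\<^sup>2 \<partial>M)" for n
  proof -
    have "(\<integral>\<^sup>+x. ennreal ((norm (f x - S n x))\<^sup>2) \<partial>M) = ennreal (\<integral>x. (norm (f x - S n x))\<^sup>2 \<partial>M)"
      by (rule nn_integral_eq_integral) (auto intro: bdd_sq_int[OF bdd_diff[OF bf bS]])
    also have "\<dots> \<le> ennreal (\<integral>x. (norm (f x))\<^sup>2 \<partial>M)"
      using pythag_le[OF bf Ffin FL, of n] unfolding S_def a_def by (intro ennreal_leI)
    finally show ?thesis .
  qed
  have fg2: "integrable M (\<lambda>x. (norm (f x - g x))\<^sup>2)"
  proof -
    have lim: "AE x in M. (\<lambda>n. ennreal ((norm (f x - S n x))\<^sup>2)) \<longlonglongrightarrow> ennreal ((norm (f x - g x))\<^sup>2)"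
      using Slim by eventually_elim (intro tendsto_ennrealI tendsto_power tendsto_norm tendsto_diff tendsto_const)
    have "(\<integral>\<^sup>+x. ennreal ((norm (f x - g x))\<^sup>2) \<partial>M) = (\<integral>\<^sup>+x. liminf (\<lambda>n. ennreal ((norm (f x - S n x))\<^sup>2)) \<partial>M)"
    proof (rule nn_integral_cong_AE)
      show "AE x in M. ennreal ((norm (f x - g x))\<^sup>2) = liminf (\<lambda>n. ennreal ((norm (f x - S n x))\<^sup>2))"
        using lim
      proof eventually_elim
        case (elim x)
        show ?case by (rule lim_imp_Liminf[OF trivial_limit_sequentially elim, symmetric])
      qed
    qed
    also have "\<dots> \<le> liminf (\<lambda>n. \<integral>\<^sup>+x. ennreal ((norm (f x - S n x))\<^sup>2) \<partial>M)"
      by (rule nn_integral_liminf) measurable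
    also have "\<dots> \<le> ennreal (\<integral>x. (norm (f x))\<^sup>2 \<partial>M)"
      by (rule order_trans[OF Liminf_le_Limsup Limsup_bounded]) (auto simp: fS2)
    also have "\<dots> < \<infinity>" by simp
    finally show ?thesis unfolding integrable_iff_bounded by auto
  qed
  have "AE x in M. f x - g x = 0"
  proof (rule compl)
    show "(\<lambda>x. f x - g x) \<in> borel_measurable M" by measurable
    show "integrable M (\<lambda>x. (norm (f x - g x))\<^sup>2)" by (rule fg2)
    show "\<forall>l\<in>L. (\<integral>x. (f x - g x) * cnj (e l x) \<partial>M) = 0"
    proof
      fix l assume l: "l \<in> L"
      have "(\<integral>x. (f x - g x) * cnj (e l x) \<partial>M) = ipr f (e l) - ipr g (e l)"
        unfolding ipr_def left_diff_distrib
        by (rule Bochner_Integration.integral_diff) (auto intro: int_gu[OF bdd_e] bdd_integrable bdd_mult_cnj bf bdd_e)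
      then show "(\<integral>x. (f x - g x) * cnj (e l x) \<partial>M) = 0" using cg[OF l] by (simp add: cf_def)
    qed
  qed
  note AEfg = this
  have hmeas[measurable]: "h \<in> borel_measurable M" using bh bdd_meas by auto
  have fg: "ipr f h = ipr g h" unfolding ipr_def
  proof (rule integral_cong_AE)
    show "(\<lambda>x. f x * cnj (h x)) \<in> borel_measurable M" by measurable
    show "(\<lambda>x. g x * cnj (h x)) \<in> borel_measurable M" by measurable
    show "AE x in M. f x * cnj (h x) = g x * cnj (h x)" using AEfg by eventually_elim simp
  qed
  have Sh: "ipr (S n) h = (\<Sum>l\<in>F n. a l * cnj (cf h l))" for n
    unfolding S_def by (subst ipr_esum_left[OF Ffin bh]) (simp add: cf_def ipr_cnj[of "e _" h])
  have summ: "(\<lambda>l. a l * cnj (cf h l)) summable_on L"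
  proof -
    have "(\<lambda>l. (1/mm) * (cf f l * cnj (cf h l))) summable_on L"
      using summable_prod[OF bf bh] by (rule summable_on_cmult_right)
    then show ?thesis by (simp add: a_def)
  qed
  have "(\<lambda>n. ipr (S n) h) \<longlonglongrightarrow> infsum (\<lambda>l. a l * cnj (cf h l)) L"
    unfolding Sh by (rule sum_tendsto_infsum[OF summ Flim])
  moreover have "(\<lambda>n. ipr (S n) h) \<longlonglongrightarrow> ipr f h" using conv[OF bh] fg by simp
  ultimately have "infsum (\<lambda>l. a l * cnj (cf h l)) L = ipr f h" using LIMSEQ_unique by blast
  then have "((\<lambda>l. a l * cnj (cf h l)) has_sum ipr f h) L" using summ by (metis summable_iff_has_sum_infsum)
  then have "((\<lambda>l. of_real mm * (a l * cnj (cf h l))) has_sum (of_real mm * ipr f h)) L"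
    by (rule has_sum_cmult_right)
  moreover have "(\<lambda>l. of_real mm * (a l * cnj (cf h l))) = (\<lambda>l. cf f l * cnj (cf h l))"
    using mm0 by (auto simp: a_def)
  ultimately show ?thesis by simp
qed

end

lemma cont_expo: "continuous_on UNIV (expo l)"
  unfolding expo_def cis_conv_exp by (intro continuous_intros)

lemma expo_borel[measurable]: "expo l \<in> borel_measurable borel"
  using cont_expo by (rule borel_measurable_continuous_onI)

lemma norm_expo[simp]: "norm (expo l x) = 1" by (simp add: expo_def)

lemma expo_add: "expo l (s + w) = expo l s * expo l w"
  by (simp add: expo_def inner_add_right distrib_left cis_mult)

lemma unit_cnj: "norm c = 1 \<Longrightarrow> c * cnj c = 1"
  by (metis complex_norm_square one_power2 of_real_1)

lemma expo_cnj_mult[simp]: "expo l x * cnj (expo l x) = 1"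
  by (rule unit_cnj) simp

lemma bor_leb: "G \<in> borel_measurable borel \<Longrightarrow> G \<in> borel_measurable (lebesgue_on S)"
  by (rule measurable_restrict_space1, rule measurable_completion) (simp add: measurable_lborel1)

lemma bor_lborel: "G \<in> borel_measurable borel \<Longrightarrow> G \<in> borel_measurable lborel"
  by (simp add: measurable_lborel1)

lemma borel_trans: fixes X :: "'a::euclidean_space set" assumes "X \<in> sets borel" shows "(+) s ` X \<in> sets borel"
proof -
  have "(+) s ` X = (\<lambda>x. x - s) -` X \<inter> space borel"
    by (auto intro: image_eqI[where x="x - s" for x])
  also have "\<dots> \<in> sets borel"
    by (rule measurable_sets[OF _ assms]) measurable
  finally show ?thesis .
qed

lemma restr:
  fixes G :: "'a::euclidean_space \<Rightarrow> complex"
  assumes "X \<in> sets borel" "X \<subseteq> S" "S \<in> sets lebesgue" "G \<in> borel_measurable borel"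
  shows "integral\<^sup>L (lebesgue_on S) (\<lambda>x. indicator X x * G x) = integral\<^sup>L lborel (\<lambda>x. indicator X x * G x)"
proof -
  have [measurable]: "G \<in> borel_measurable borel" "X \<in> sets borel" using assms by auto
  have "integral\<^sup>L (lebesgue_on S) (\<lambda>x. indicator X x * G x) = (\<integral>x. indicator S x *\<^sub>R (indicator X x * G x) \<partial>lebesgue)"
    by (rule integral_restrict_space) (use assms in auto)
  also have "\<dots> = (\<integral>x. indicator X x * G x \<partial>lebesgue)"
    by (rule Bochner_Integration.integral_cong) (use assms in \<open>auto simp: indicator_def\<close>)
  also have "\<dots> = (\<integral>x. indicator X x * G x \<partial>lborel)"
    by (rule integral_completion) (simp add: measurable_lborel1)
  finally show ?thesis .
qed

definition JJ :: "'a::euclidean_space \<Rightarrow> 'a set \<Rightarrow> 'a \<Rightarrow> complex" where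
  "JJ a X l = (\<integral>x. indicator X x * (expo a x * cnj (expo l x)) \<partial>lborel)"

lemma JJ_int: assumes "X \<in> sets borel" "emeasure lborel X < \<infinity>"
  shows "integrable lborel (\<lambda>x. indicator X x * (expo a x * cnj (expo l x)))"
proof (rule Bochner_Integration.integrable_bound[where f="indicator X :: 'a \<Rightarrow> real"])
  show "integrable lborel (indicator X :: 'a \<Rightarrow> real)" using assms by (intro integrable_real_indicator) auto
  have [measurable]: "X \<in> sets borel" by (rule assms(1))
  show "(\<lambda>x. indicator X x * (expo a x * cnj (expo l x))) \<in> borel_measurable lborel"
    by (intro bor_lborel) measurable
  show "AE x in lborel. norm (indicator X x * (expo a x * cnj (expo l x))) \<le> norm (indicator X x :: real)"
    by (rule AE_I2) (simp add: indicator_def norm_mult)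
qed

lemma JJ_split: assumes "X \<in> sets borel" "Y \<in> sets borel" "emeasure lborel X < \<infinity>"
  shows "JJ a X l = JJ a (X \<inter> Y) l + JJ a (X - Y) l"
proof -
  have "emeasure lborel (X \<inter> Y) \<le> emeasure lborel X" by (rule emeasure_mono) (use assms in auto)
  then have f1: "emeasure lborel (X \<inter> Y) < \<infinity>" using assms(3) by (rule order.strict_trans1)
  have "emeasure lborel (X - Y) \<le> emeasure lborel X" by (rule emeasure_mono) (use assms in auto)
  then have f2: "emeasure lborel (X - Y) < \<infinity>" using assms(3) by (rule order.strict_trans1)
  have "JJ a (X \<inter> Y) l + JJ a (X - Y) l =
      (\<integral>x. indicator (X \<inter> Y) x * (expo a x * cnj (expo l x)) + indicator (X - Y) x * (expo a x * cnj (expo l x)) \<partial>lborel)"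
    unfolding JJ_def
    by (rule Bochner_Integration.integral_add[symmetric]) (use assms f1 f2 in \<open>auto intro!: JJ_int\<close>)
  also have "\<dots> = JJ a X l" unfolding JJ_def
    by (rule Bochner_Integration.integral_cong) (auto simp: indicator_def)
  finally show ?thesis by simp
qed

lemma JJ_empty[simp]: "JJ a {} l = 0" by (simp add: JJ_def)

lemma JJ_trans: assumes "X \<in> sets borel"
  shows "JJ a ((+) s ` X) l = (expo a s * cnj (expo l s)) * JJ a X l"
proof -
  have tb[measurable]: "(+) s ` X \<in> sets borel" by (rule borel_trans[OF assms])
  have [measurable]: "X \<in> sets borel" by (rule assms)
  have "JJ a ((+) s ` X) l = (\<integral>x. indicator ((+) s ` X) x * (expo a x * cnj (expo l x)) \<partial>distr lborel borel ((+) s))"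
    unfolding JJ_def lborel_distr_plus ..
  also have "\<dots> = (\<integral>w. indicator ((+) s ` X) (s + w) * (expo a (s + w) * cnj (expo l (s + w))) \<partial>lborel)"
    by (rule integral_distr) (auto simp: measurable_lborel1)
  also have "\<dots> = (\<integral>w. (expo a s * cnj (expo l s)) * (indicator X w * (expo a w * cnj (expo l w))) \<partial>lborel)"
    by (rule Bochner_Integration.integral_cong) (auto simp: indicator_def expo_add image_iff)
  also have "\<dots> = (expo a s * cnj (expo l s)) * JJ a X l"
    unfolding JJ_def by (rule integral_mult_right_zero)
  finally show ?thesis .
qed

lemma cnj_mult_unit: "norm c = 1 \<Longrightarrow> (c * u) * cnj (c * v) = u * cnj v"
proof -
  assume "norm c = 1"
  then have "c * cnj c = 1" by (rule unit_cnj)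
  then have "(c * u) * cnj (c * v) = (c * cnj c) * (u * cnj v)" by (simp add: ac_simps)
  then show ?thesis using \<open>c * cnj c = 1\<close> by simp
qed


lemma has_sum_norm_le:
  fixes f :: "'b \<Rightarrow> complex"
  assumes "(f has_sum a) A" "(g has_sum b) A" "\<And>x. x \<in> A \<Longrightarrow> norm (f x) \<le> g x"
  shows "norm a \<le> b"
proof -
  have gs: "g summable_on A" using assms(2) by (rule has_sum_imp_summable)
  have ns: "(\<lambda>x. norm (f x)) summable_on A"
    by (rule Infinite_Sum.abs_summable_on_comparison_test'[OF gs assms(3)])
  have "norm a = norm (infsum f A)" using assms(1) by (simp add: infsumI)
  also have "\<dots> \<le> infsum (\<lambda>x. norm (f x)) A" by (rule norm_infsum_bound[OF ns])
  also have "\<dots> \<le> infsum g A" by (rule infsum_mono[OF ns gs assms(3)])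
  also have "\<dots> = b" using assms(2) by (simp add: infsumI)
  finally show ?thesis .
qed

locale specset =
  fixes Om :: "'a::euclidean_space set" and Lam :: "'a set"
  assumes bnd: "bounded Om" and opn: "open Om" and nem: "Om \<noteq> {}"
    and cntL: "countable Lam" and onb: "orthogonal_basis_exps Om Lam"
begin

lemma Om_borel[measurable]: "Om \<in> sets borel" using opn by (rule borel_open)
lemma Om_lm: "Om \<in> lmeasurable" using bnd opn by (rule lmeasurable_open)
lemma Om_leb: "Om \<in> sets lebesgue" using Om_lm by (rule fmeasurableD)
lemma space_Om[simp]: "space (lebesgue_on Om) = Om" by (simp add: space_restrict_space)
lemma meas_Om: "measure (lebesgue_on Om) Om = measure lebesgue Om"
  by (rule measure_restrict_space) (use Om_leb in auto)

lemma mpos: "measure lebesgue Om > 0"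
proof -
  obtain x where "x \<in> Om" using nem by auto
  then obtain r where r: "r > 0" "ball x r \<subseteq> Om" using opn by (meson openE)
  have "0 < measure lborel (ball x r)" using r(1) by (rule content_ball_pos)
  also have "measure lborel (ball x r) = measure lebesgue (ball x r)" by (rule measure_completion[symmetric]) simp
  also have "\<dots> \<le> measure lebesgue Om" by (rule measure_mono_fmeasurable) (use r Om_lm in auto)
  finally show ?thesis .
qed

lemma fm: "finite_measure (lebesgue_on Om)" by (rule finite_measure_lebesgue_on[OF Om_lm])

lemma Lne: "Lam \<noteq> {}"
proof
  assume L0: "Lam = {}"
  have "square_integrable_on (\<lambda>_. 1::complex) Om"
    unfolding square_integrable_on_def using finite_measure.integrable_const[OF fm] by simp
  then have "AE x in lebesgue_on Om. (1::complex) = 0"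
    using onb L0 unfolding orthogonal_basis_exps_def by blast
  then obtain N where N: "{x \<in> space (lebesgue_on Om). \<not> ((1::complex) = 0)} \<subseteq> N"
    "emeasure (lebesgue_on Om) N = 0" "N \<in> sets (lebesgue_on Om)" by (rule AE_E)
  have "emeasure (lebesgue_on Om) (space (lebesgue_on Om)) \<le> emeasure (lebesgue_on Om) N"
    by (rule emeasure_mono) (use N in auto)
  then have "emeasure (lebesgue_on Om) (space (lebesgue_on Om)) = 0" using N(2) by simp
  then have "measure (lebesgue_on Om) Om = 0" by (simp add: measure_def)
  then show False using meas_Om mpos by simp
qed

sublocale P: pset "lebesgue_on Om" Lam expo
proof (rule pset.intro[OF fm], unfold_locales)
  fix l show "expo l \<in> borel_measurable (lebesgue_on Om)" by (rule bor_leb) simp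
next
  fix l x show "norm (expo l x) = 1" by simp
next
  fix l k assume "l \<in> Lam" "k \<in> Lam" "l \<noteq> k"
  then show "(\<integral>x. expo l x * cnj (expo k x) \<partial>lebesgue_on Om) = 0"
    using onb unfolding orthogonal_basis_exps_def L2_inner_def by blast
next
  fix f :: "'a \<Rightarrow> complex"
  assume "f \<in> borel_measurable (lebesgue_on Om)" "integrable (lebesgue_on Om) (\<lambda>x. (norm (f x))\<^sup>2)"
    "\<forall>l\<in>Lam. (\<integral>x. f x * cnj (expo l x) \<partial>lebesgue_on Om) = 0"
  then show "AE x in lebesgue_on Om. f x = 0"
    using onb unfolding orthogonal_basis_exps_def L2_inner_def square_integrable_on_def by blast
next
  show "countable Lam" by (rule cntL)
next
  show "Lam \<noteq> {}" by (rule Lne)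
next
  show "measure (lebesgue_on Om) (space (lebesgue_on Om)) > 0" using mpos meas_Om by simp
qed

definition "l0 = (SOME l. l \<in> Lam)"
lemma l0: "l0 \<in> Lam" using Lne unfolding l0_def by (simp add: some_in_eq)

lemma mm_eq: "P.mm = measure lebesgue Om" unfolding P.mm_def using meas_Om by simp

lemma bdd_fX: assumes "X \<in> sets borel" shows "P.bdd (\<lambda>x. indicator X x * expo l0 x)"
proof -
  have [measurable]: "X \<in> sets borel" by (rule assms)
  show ?thesis
    by (rule P.bddI[where B=1]) (rule bor_leb, measurable, simp add: indicator_def)
qed

lemma cfJ: assumes "X \<in> sets borel" "X \<subseteq> Om"
  shows "P.cf (\<lambda>x. indicator X x * expo l0 x) l = JJ l0 X l"
proof -
  have "P.cf (\<lambda>x. indicator X x * expo l0 x) l = (\<integral>x. indicator X x * (expo l0 x * cnj (expo l x)) \<partial>lebesgue_on Om)"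
    unfolding P.cf_def P.ipr_def by (simp add: mult.assoc)
  also have "\<dots> = JJ l0 X l" unfolding JJ_def
    by (rule restr) (use assms Om_leb in auto)
  finally show ?thesis .
qed

lemma iprJ: assumes "X \<in> sets borel" "Y \<in> sets borel" "X \<subseteq> Om" "Y \<subseteq> Om"
  shows "P.ipr (\<lambda>x. indicator X x * expo l0 x) (\<lambda>x. indicator Y x * expo l0 x) = measure lebesgue (X \<inter> Y)"
proof -
  have "P.ipr (\<lambda>x. indicator X x * expo l0 x) (\<lambda>x. indicator Y x * expo l0 x)
      = (\<integral>x. complex_of_real (indicator (X \<inter> Y) x) \<partial>lebesgue_on Om)"
    unfolding P.ipr_def by (rule Bochner_Integration.integral_cong) (auto simp: indicator_def)
  also have "\<dots> = of_real (\<integral>x. indicator (X \<inter> Y) x \<partial>lebesgue_on Om)" by (rule integral_complex_of_real)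
  also have "(\<integral>x. indicator (X \<inter> Y) x \<partial>lebesgue_on Om) = measure (lebesgue_on Om) ((X \<inter> Y) \<inter> space (lebesgue_on Om))"
    by (rule Bochner_Integration.integral_indicator)
  also have "\<dots> = measure lebesgue (X \<inter> Y)"
  proof -
    have "X \<inter> Y \<inter> space (lebesgue_on Om) = X \<inter> Y" using assms by auto
    moreover have "measure (lebesgue_on Om) (X \<inter> Y) = measure lebesgue (X \<inter> Y)"
      by (rule measure_restrict_space) (use Om_leb assms in auto)
    ultimately show ?thesis by simp
  qed
  finally show ?thesis .
qed


lemma PS: assumes Xb: "X \<in> sets borel" and Yb: "Y \<in> sets borel"
    and XS: "X \<subseteq> (+) s ` Om" and YS: "Y \<subseteq> (+) s ` Om"
  shows "((\<lambda>l. JJ l0 X l * cnj (JJ l0 Y l)) has_sum complex_of_real (P.mm * measure lebesgue (X \<inter> Y))) Lam"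
proof -
  define X' where "X' = (+) (-s) ` X"
  define Y' where "Y' = (+) (-s) ` Y"
  have X'b: "X' \<in> sets borel" unfolding X'_def by (rule borel_trans[OF Xb])
  have Y'b: "Y' \<in> sets borel" unfolding Y'_def by (rule borel_trans[OF Yb])
  have X'O: "X' \<subseteq> Om" using XS unfolding X'_def by auto
  have Y'O: "Y' \<subseteq> Om" using YS unfolding Y'_def by auto
  have XX: "X = (+) s ` X'" unfolding X'_def by (simp add: image_image)
  have YY: "Y = (+) s ` Y'" unfolding Y'_def by (simp add: image_image)
  have JX: "JJ l0 X l = (expo l0 s * cnj (expo l s)) * JJ l0 X' l" for l
    by (subst XX) (rule JJ_trans[OF X'b])
  have JY: "JJ l0 Y l = (expo l0 s * cnj (expo l s)) * JJ l0 Y' l" for l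
    by (subst YY) (rule JJ_trans[OF Y'b])
  have nc: "norm (expo l0 s * cnj (expo l s)) = 1" for l by (simp add: norm_mult)
  have eq: "(\<lambda>l. JJ l0 X l * cnj (JJ l0 Y l)) = (\<lambda>l. JJ l0 X' l * cnj (JJ l0 Y' l))"
    by (rule ext) (simp only: JX JY cnj_mult_unit[OF nc])
  have "((\<lambda>l. P.cf (\<lambda>x. indicator X' x * expo l0 x) l * cnj (P.cf (\<lambda>x. indicator Y' x * expo l0 x) l))
      has_sum (P.mm * P.ipr (\<lambda>x. indicator X' x * expo l0 x) (\<lambda>x. indicator Y' x * expo l0 x))) Lam"
    by (rule P.parseval[OF bdd_fX[OF X'b] bdd_fX[OF Y'b]])
  then have hs: "((\<lambda>l. JJ l0 X' l * cnj (JJ l0 Y' l)) has_sum (P.mm * complex_of_real (measure lebesgue (X' \<inter> Y')))) Lam"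
    by (simp only: cfJ[OF X'b X'O] cfJ[OF Y'b Y'O] iprJ[OF X'b Y'b X'O Y'O])
  have "X' \<inter> Y' = (+) (-s) ` (X \<inter> Y)" unfolding X'_def Y'_def by auto
  then have "measure lebesgue (X' \<inter> Y') = measure lebesgue (X \<inter> Y)" using measure_translation[of "-s" "X \<inter> Y"] by simp
  then show ?thesis using hs eq by simp
qed

lemma PS_norm: assumes "X \<in> sets borel" "X \<subseteq> (+) s ` Om"
  shows "((\<lambda>l. (norm (JJ l0 X l))\<^sup>2) has_sum (P.mm * measure lebesgue X)) Lam"
proof -
  have "((\<lambda>l. Re (JJ l0 X l * cnj (JJ l0 X l))) has_sum Re (complex_of_real (P.mm * measure lebesgue (X \<inter> X)))) Lam"
    by (rule has_sum_Re[OF PS[OF assms(1) assms(1) assms(2) assms(2)]])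
  moreover have "Re (z * cnj z) = (norm z)\<^sup>2" for z :: complex
    by (simp only: complex_norm_square[symmetric] Re_complex_of_real)
  ultimately show ?thesis by simp
qed

lemma JOm: assumes l: "l \<in> Lam" shows "JJ l0 Om l = (if l = l0 then P.mm else 0)"
proof -
  have "JJ l0 Om l = P.cf (\<lambda>x. indicator Om x * expo l0 x) l" by (rule cfJ[symmetric]) auto
  also have "\<dots> = P.ipr (expo l0) (expo l)"
    unfolding P.cf_def P.ipr_def by (rule Bochner_Integration.integral_cong) auto
  also have "\<dots> = (if l = l0 then P.mm else 0)" using P.ipr_ee[OF l0 l] by auto
  finally show ?thesis .
qed

lemma JE_l0: assumes "X \<in> sets borel" "emeasure lborel X < \<infinity>"
  shows "JJ l0 X l0 = measure lebesgue X"
proof -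
  have "JJ l0 X l0 = (\<integral>x. complex_of_real (indicator X x) \<partial>lborel)"
    unfolding JJ_def by (rule Bochner_Integration.integral_cong) (auto simp: indicator_def)
  also have "\<dots> = of_real (\<integral>x. indicator X x \<partial>lborel)" by (rule integral_complex_of_real)
  also have "(\<integral>x. indicator X x \<partial>lborel) = measure lborel X"
    using Bochner_Integration.integral_indicator[of lborel X] by simp
  also have "measure lborel X = measure lebesgue X" by (rule measure_completion[symmetric]) (use assms in simp)
  finally show ?thesis .
qed


lemma frontier_Om: "frontier Om \<inter> Om = {}"
  using opn by (auto simp: frontier_def interior_open)

lemma claimB:
  assumes A: "compact A" "A \<subseteq> Om"
    and Eb: "E \<in> sets borel" and EF: "E \<subseteq> frontier Om" and Efin: "emeasure lborel E < \<infinity>"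
  shows "((\<lambda>l. JJ l0 A l * cnj (JJ l0 E l)) has_sum 0) Lam"
proof -
  obtain d where d: "d > 0" "(\<Union>x\<in>A. ball x d) \<subseteq> Om"
    using compact_subset_open_imp_ball_epsilon_subset[OF A(1) opn A(2)] by blast
  have Ab: "A \<in> sets borel" using A(1) by (simp add: borel_closed compact_imp_closed)
  have Asub: "A \<subseteq> (+) s ` Om" if "norm s < d" for s
  proof
    fix x assume x: "x \<in> A"
    have "x - s \<in> ball x d" using that by (simp add: dist_norm)
    then have "x - s \<in> Om" using d(2) x by blast
    then show "x \<in> (+) s ` Om" by (rule rev_image_eqI) simp
  qed
  define FF where "FF = (\<lambda>s. (+) s ` Om) ` ball 0 d"
  have opens: "\<forall>c\<in>FF. open c" unfolding FF_def using opn by (auto intro: open_translation)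
  have cover: "frontier Om \<subseteq> \<Union>FF"
  proof
    fix z assume "z \<in> frontier Om"
    then have "z \<in> closure Om" by (simp add: frontier_def)
    then obtain y where y: "y \<in> Om" "dist y z < d" using d(1) closure_approachable by blast
    have "z = (z - y) + y" by simp
    moreover have "z - y \<in> ball 0 d" using y(2) by (simp add: dist_norm norm_minus_commute)
    ultimately show "z \<in> \<Union>FF" unfolding FF_def using y(1) by blast
  qed
  obtain DD where DD: "DD \<subseteq> FF" "finite DD" "frontier Om \<subseteq> \<Union>DD"
    using compact_frontier_bounded[OF bnd] opens cover unfolding compact_eq_Heine_Borel by meson
  have ind: "\<forall>X. X \<in> sets borel \<longrightarrow> X \<subseteq> E \<longrightarrow> X \<subseteq> \<Union>TT \<longrightarrow> ((\<lambda>l. JJ l0 A l * cnj (JJ l0 X l)) has_sum 0) Lam"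
    if "finite TT" "TT \<subseteq> FF" for TT
    using that
  proof (induction TT rule: finite_induct)
    case empty
    then show ?case by (auto intro: has_sum_0)
  next
    case (insert T TT)
    show ?case
    proof (intro allI impI)
      fix X assume Xb: "X \<in> sets borel" and XE: "X \<subseteq> E" and XU: "X \<subseteq> \<Union>(insert T TT)"
      obtain s where s: "norm s < d" "T = (+) s ` Om" using insert.prems unfolding FF_def by auto
      have Tb: "T \<in> sets borel" using s(2) opn by (simp add: borel_open open_translation)
      have Xfin: "emeasure lborel X < \<infinity>"
        using emeasure_mono[OF XE, of lborel] Eb Efin by (simp add: order.strict_trans1)
      have h2: "((\<lambda>l. JJ l0 A l * cnj (JJ l0 (X - T) l)) has_sum 0) Lam"
        using insert.IH insert.prems Xb Tb XE XU by auto
      have "((\<lambda>l. JJ l0 A l * cnj (JJ l0 (X \<inter> T) l)) has_sum complex_of_real (P.mm * measure lebesgue (A \<inter> (X \<inter> T)))) Lam"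
        by (rule PS[OF Ab _ Asub[OF s(1)]]) (use Xb Tb s in auto)
      moreover have "A \<inter> (X \<inter> T) = {}" using A(2) XE EF frontier_Om by blast
      ultimately have h1: "((\<lambda>l. JJ l0 A l * cnj (JJ l0 (X \<inter> T) l)) has_sum 0) Lam" by simp
      have "((\<lambda>l. JJ l0 A l * cnj (JJ l0 (X \<inter> T) l) + JJ l0 A l * cnj (JJ l0 (X - T) l)) has_sum (0 + 0)) Lam"
        by (rule has_sum_add[OF h1 h2])
      moreover have "JJ l0 A l * cnj (JJ l0 (X \<inter> T) l) + JJ l0 A l * cnj (JJ l0 (X - T) l) = JJ l0 A l * cnj (JJ l0 X l)" for l
        using JJ_split[OF Xb Tb Xfin, of l0 l] by (simp add: distrib_left)
      ultimately show "((\<lambda>l. JJ l0 A l * cnj (JJ l0 X l)) has_sum 0) Lam" by simp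
    qed
  qed
  show ?thesis using ind[OF DD(2,1)] Eb EF DD(3) by blast
qed

lemma key:
  assumes A: "compact A" "A \<subseteq> Om"
  shows "measure lebesgue (frontier Om \<inter> (+) t ` Om) \<le> measure lebesgue (Om - A)"
proof -
  define E where "E = frontier Om \<inter> (+) t ` Om"
  have Eb: "E \<in> sets borel" unfolding E_def using opn
    by (intro sets.Int borel_closed borel_open frontier_closed open_translation)
  have EF: "E \<subseteq> frontier Om" unfolding E_def by auto
  have ET: "E \<subseteq> (+) t ` Om" unfolding E_def by auto
  have Ebnd: "bounded E" using EF compact_imp_bounded[OF compact_frontier_bounded[OF bnd]] bounded_subset by blast
  have Efin: "emeasure lborel E < \<infinity>" using Ebnd by (rule emeasure_bounded_finite)
  have Ab: "A \<in> sets borel" using A(1) by (simp add: borel_closed compact_imp_closed)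
  have OAb: "Om - A \<in> sets borel" using Ab by auto
  have Omfin: "emeasure lborel Om < \<infinity>" using bnd by (rule emeasure_bounded_finite)
  have hB: "((\<lambda>l. JJ l0 A l * cnj (JJ l0 E l)) has_sum 0) Lam" by (rule claimB[OF A Eb EF Efin])
  have hA: "((\<lambda>l. JJ l0 Om l * cnj (JJ l0 E l)) has_sum (P.mm * cnj (JJ l0 E l0))) Lam"
  proof (rule has_sum_finite_neutralI[where B="{l0}"])
    show "finite {l0}" by simp
    show "{l0} \<subseteq> Lam" using l0 by simp
    show "JJ l0 Om l * cnj (JJ l0 E l) = 0" if "l \<in> Lam - {l0}" for l using that JOm by auto
    show "complex_of_real P.mm * cnj (JJ l0 E l0) = (\<Sum>l\<in>{l0}. JJ l0 Om l * cnj (JJ l0 E l))"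
      using JOm[OF l0] by simp
  qed
  have JE0: "JJ l0 E l0 = measure lebesgue E" by (rule JE_l0[OF Eb Efin])
  have split: "JJ l0 Om l = JJ l0 A l + JJ l0 (Om - A) l" for l
    using JJ_split[OF Om_borel Ab Omfin, of l0 l] A(2) by (simp add: Int_absorb1)
  have "((\<lambda>l. JJ l0 Om l * cnj (JJ l0 E l) + (-1) * (JJ l0 A l * cnj (JJ l0 E l))) has_sum (P.mm * cnj (JJ l0 E l0) + (-1) * 0)) Lam"
    by (rule has_sum_add[OF hA has_sum_cmult_right[OF hB]])
  moreover have "JJ l0 Om l * cnj (JJ l0 E l) + (-1) * (JJ l0 A l * cnj (JJ l0 E l)) = JJ l0 (Om - A) l * cnj (JJ l0 E l)" for l
    by (simp add: split algebra_simps)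
  ultimately have hD: "((\<lambda>l. JJ l0 (Om - A) l * cnj (JJ l0 E l)) has_sum complex_of_real (P.mm * measure lebesgue E)) Lam"
    by (simp add: JE0)
  have h1: "((\<lambda>l. (norm (JJ l0 (Om - A) l))\<^sup>2) has_sum (P.mm * measure lebesgue (Om - A))) Lam"
    by (rule PS_norm[OF OAb, of 0]) auto
  have h2: "((\<lambda>l. (norm (JJ l0 E l))\<^sup>2) has_sum (P.mm * measure lebesgue E)) Lam"
    by (rule PS_norm[OF Eb ET])
  have h3: "((\<lambda>l. ((norm (JJ l0 (Om - A) l))\<^sup>2 + (norm (JJ l0 E l))\<^sup>2) / 2)
      has_sum ((P.mm * measure lebesgue (Om - A) + P.mm * measure lebesgue E) / 2)) Lam"
    using has_sum_cmult_right[OF has_sum_add[OF h1 h2], of "1/2"] by simp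
  have ineq: "norm (complex_of_real (P.mm * measure lebesgue E)) \<le> (P.mm * measure lebesgue (Om - A) + P.mm * measure lebesgue E) / 2"
  proof (rule has_sum_norm_le[OF hD h3])
    fix l
    have "0 \<le> (norm (JJ l0 (Om - A) l) - norm (JJ l0 E l))\<^sup>2" by simp
    then show "norm (JJ l0 (Om - A) l * cnj (JJ l0 E l)) \<le> ((norm (JJ l0 (Om - A) l))\<^sup>2 + (norm (JJ l0 E l))\<^sup>2) / 2"
      by (simp add: norm_mult power2_eq_square algebra_simps)
  qed
  have mmp: "P.mm > 0" by (rule P.mm_pos)
  have nrm: "norm (complex_of_real (P.mm * measure lebesgue E)) = P.mm * measure lebesgue E"
    using mmp by (simp only: norm_of_real) (simp add: abs_of_nonneg)
  have "P.mm * measure lebesgue E \<le> (P.mm * measure lebesgue (Om - A) + P.mm * measure lebesgue E) / 2"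
    using ineq unfolding nrm .
  then have "P.mm * measure lebesgue E \<le> P.mm * measure lebesgue (Om - A)" by (simp add: field_simps)
  then have "measure lebesgue E \<le> measure lebesgue (Om - A)" using mmp by (simp add: mult_le_cancel_left_pos)
  then show ?thesis unfolding E_def .
qed

lemma E_null: "measure lebesgue (frontier Om \<inter> (+) t ` Om) = 0"
proof -
  have "measure lebesgue (frontier Om \<inter> (+) t ` Om) \<le> e" if e: "e > 0" for e
  proof -
    obtain T where T: "closed T" "T \<subseteq> Om" "Om - T \<in> lmeasurable" "emeasure lebesgue (Om - T) < ennreal e"
      using sets_lebesgue_inner_closed[OF Om_leb e] by blast
    have cT: "compact T" using T(1,2) bnd by (meson bounded_subset compact_eq_bounded_closed)
    have "measure lebesgue (Om - T) < e"
      using T(3,4) e by (simp add: emeasure_eq_measure2 ennreal_less_iff)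
    then show ?thesis using key[OF cT T(2), of t] by simp
  qed
  then have "measure lebesgue (frontier Om \<inter> (+) t ` Om) \<le> 0" by (meson dense_ge)
  then show ?thesis by (simp add: measure_nonneg antisym)
qed

lemma frontier_null: "frontier Om \<in> null_sets lebesgue"
proof -
  define GG where "GG = (\<lambda>t. (+) t ` Om) ` UNIV"
  have opens: "\<forall>c\<in>GG. open c" unfolding GG_def using opn by (auto intro: open_translation)
  obtain y where y: "y \<in> Om" using nem by auto
  have cover: "frontier Om \<subseteq> \<Union>GG"
  proof
    fix z assume "z \<in> frontier Om"
    have "z = (z - y) + y" by simp
    then show "z \<in> \<Union>GG" unfolding GG_def using y by blast
  qed
  obtain DD where DD: "DD \<subseteq> GG" "finite DD" "frontier Om \<subseteq> \<Union>DD"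
    using compact_frontier_bounded[OF bnd] opens cover unfolding compact_eq_Heine_Borel by meson
  have "(\<Union>T\<in>DD. frontier Om \<inter> T) \<in> null_sets lebesgue"
  proof (rule null_sets.finite_UN[OF DD(2)])
    fix T assume "T \<in> DD"
    then obtain t where t: "T = (+) t ` Om" using DD(1) unfolding GG_def by auto
    have Eb: "frontier Om \<inter> T \<in> sets borel" unfolding t using opn
      by (intro sets.Int borel_closed borel_open frontier_closed open_translation)
    have Ebnd: "bounded (frontier Om \<inter> T)" using compact_imp_bounded[OF compact_frontier_bounded[OF bnd]] bounded_subset by blast
    have Elm: "frontier Om \<inter> T \<in> lmeasurable"
      by (rule bounded_set_imp_lmeasurable[OF Ebnd]) (use Eb in simp)
    have "emeasure lebesgue (frontier Om \<inter> T) = 0"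
      using E_null[of t] Elm unfolding t by (simp add: emeasure_eq_measure2)
    then show "frontier Om \<inter> T \<in> null_sets lebesgue" using Elm by (auto simp: null_sets_def fmeasurableD)
  qed
  moreover have "frontier Om \<in> sets lebesgue" using lmeasurable_frontier[OF bnd] by (rule fmeasurableD)
  moreover have "frontier Om \<subseteq> (\<Union>T\<in>DD. frontier Om \<inter> T)" using DD(3) by blast
  ultimately show ?thesis by (rule null_sets_subset)
qed

end

theorem theorem3p3:
  fixes \<Omega> :: "'a::euclidean_space set"
  assumes "bounded \<Omega>" and "open \<Omega>" and "\<Omega> \<noteq> {}"
    and "spectral \<Omega>"
  shows "frontier \<Omega> \<in> null_sets lebesgue"
proof -
  obtain \<Lambda> where "countable \<Lambda>" "orthogonal_basis_exps \<Omega> \<Lambda>"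
    using assms(4) unfolding spectral_def by blast
  then interpret specset \<Omega> \<Lambda> using assms by unfold_locales
  show ?thesis by (rule frontier_null)
qed

end
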